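(* Let $a\ge 2$ and $c\ge 2$ be even integers with $a\neq c$. Then $U=\{(a,-a),(c,-c)\}\subseteq\mathcal{B}$ is unavoidable.
   Context: The bicyclic inverse semigroup is $\mathcal{B}=\{(a,b)\in\mathbb{Z}\times\mathbb{Z}\mid a\ge 0,\ a+b\ge 0\}$ with multiplication $(a,b)(c,d)=(\max\{c+d,a\}-d,\ b+d)$. A subset $U\subseteq\mathcal{B}$ is called avoidable if $\mathcal{B}$ can be partitioned into two subsets $A$ and $B$ such that no element of $U$ can be written as a product $xy$ of two distinct elements $x\neq y$ both in $A$, or both in $B$. A set is unavoidable if it is not avoidable. *)

theory Defs
  imports Main
begin

definition bicyclic :: "(int \<times> int) set" where
  "bicyclic = {(a, b). a \<ge> 0 \<and> a + b \<ge> 0}"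

definition bmult :: "int \<times> int \<Rightarrow> int \<times> int \<Rightarrow> int \<times> int" where
  "bmult x y = (case x of (a, b) \<Rightarrow> case y of (c, d) \<Rightarrow> (max (c + d) a - d, b + d))"

definition avoidable :: "(int \<times> int) set \<Rightarrow> bool" where
  "avoidable U \<longleftrightarrow> (\<exists>A B. A \<union> B = bicyclic \<and> A \<inter> B = {} \<and>
     (\<forall>u\<in>U. \<forall>x y. x \<noteq> y \<and> ((x \<in> A \<and> y \<in> A) \<or> (x \<in> B \<and> y \<in> B)) \<longrightarrow> bmult x y \<noteq> u))"

definition unavoidable :: "(int \<times> int) set \<Rightarrow> bool" where
  "unavoidable U \<longleftrightarrow> \<not> avoidable U"

end

theory Submission
  imports Defs
begin

lemma aux:
  fixes a c :: int
  assumes "a \<ge> 2" and "c \<ge> 2" and "even a" and "even c" and "a < c"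
  shows "unavoidable {(a, -a), (c, -c)}"
proof -
  obtain h where h: "a = 2 * h" using assms(3) by (auto elim: evenE)
  define X where "X = (c - h, h - c)"
  define Y where "Y = (h, -h)"
  define Z where "Z = (h + 1, -h)"
  have XY: "bmult X Y = (c, -c)" unfolding X_def Y_def bmult_def using assms h by auto
  have XZ: "bmult X Z = (c, -c)" unfolding X_def Z_def bmult_def using assms h by auto
  have YZ: "bmult Y Z = (a, -a)" unfolding Y_def Z_def bmult_def using assms h by auto
  have d1: "X \<noteq> Y" unfolding X_def Y_def using assms h by auto
  have d2: "X \<noteq> Z" unfolding X_def Z_def using assms h by auto
  have d3: "Y \<noteq> Z" unfolding Y_def Z_def by auto
  have m: "X \<in> bicyclic" "Y \<in> bicyclic" "Z \<in> bicyclic"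
    unfolding X_def Y_def Z_def bicyclic_def using assms h by auto
  show ?thesis unfolding unavoidable_def avoidable_def
  proof
    assume "\<exists>A B. A \<union> B = bicyclic \<and> A \<inter> B = {} \<and>
     (\<forall>u\<in>{(a, -a), (c, -c)}. \<forall>x y. x \<noteq> y \<and> ((x \<in> A \<and> y \<in> A) \<or> (x \<in> B \<and> y \<in> B)) \<longrightarrow> bmult x y \<noteq> u)"
    then obtain A B where AB: "A \<union> B = bicyclic"
      and P: "\<forall>u\<in>{(a, -a), (c, -c)}. \<forall>x y. x \<noteq> y \<and> ((x \<in> A \<and> y \<in> A) \<or> (x \<in> B \<and> y \<in> B)) \<longrightarrow> bmult x y \<noteq> u"
      by blast
    have p1: "\<not> ((X \<in> A \<and> Y \<in> A) \<or> (X \<in> B \<and> Y \<in> B))" using P d1 XY by blast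
    have p2: "\<not> ((X \<in> A \<and> Z \<in> A) \<or> (X \<in> B \<and> Z \<in> B))" using P d2 XZ by blast
    have p3: "\<not> ((Y \<in> A \<and> Z \<in> A) \<or> (Y \<in> B \<and> Z \<in> B))" using P d3 YZ by blast
    show False using p1 p2 p3 m AB by blast
  qed
qed

theorem corollary3p3:
  fixes a c :: int
  assumes "a \<ge> 2" and "c \<ge> 2" and "even a" and "even c" and "a \<noteq> c"
  shows "unavoidable {(a, -a), (c, -c)}"
proof (cases "a < c")
  case True then show ?thesis using aux assms by blast
next
  case False then have "c < a" using assms by auto
  then have "unavoidable {(c, -c), (a, -a)}" using aux assms by blast
  then show ?thesis by (simp add: insert_commute)
qed

end
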